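(* Let $G$ be a finite group, $\rho:G\to SO(n)$ a faithful real representation, and $L=F(G)$ the Fitting subgroup of $G$. Let $U=\mathbb{R}^n$ with $G$-action via $\rho$, $U^L$ the $L$-fixed subspace, $U_L$ its orthogonal complement, and $\rho_L: G\to O(\dim U_L)$ the subrepresentation on $U_L$. Let $K=\ker\rho_L$. Then the Fitting subgroup $F(K)$ of $K$ is trivial.
   Context: The Fitting subgroup $F(X)$ of a finite group $X$ is its unique largest nilpotent normal subgroup. *)

theory Defs
  imports "HOL-Analysis.Analysis" "HOL-Algebra.Algebra"
begin

primrec lower_central :: "('a, 'b) monoid_scheme \<Rightarrow> nat \<Rightarrow> 'a set" where
  "lower_central G 0 = carrier G"
| "lower_central G (Suc i) =
     generate G {x \<otimes>\<^bsub>G\<^esub> y \<otimes>\<^bsub>G\<^esub> inv\<^bsub>G\<^esub> x \<otimes>\<^bsub>G\<^esub> inv\<^bsub>G\<^esub> y | x y.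
                   x \<in> carrier G \<and> y \<in> lower_central G i}"

definition nilpotent_group :: "('a, 'b) monoid_scheme \<Rightarrow> bool" where
  "nilpotent_group G \<longleftrightarrow> group G \<and> (\<exists>i. lower_central G i = {\<one>\<^bsub>G\<^esub>})"

definition is_fitting_subgroup :: "('a, 'b) monoid_scheme \<Rightarrow> 'a set \<Rightarrow> bool" where
  "is_fitting_subgroup G L \<longleftrightarrow>
     L \<lhd> G \<and> nilpotent_group (G\<lparr>carrier := L\<rparr>) \<and>
     (\<forall>N. N \<lhd> G \<and> nilpotent_group (G\<lparr>carrier := N\<rparr>) \<longrightarrow> N \<subseteq> L)"

definition fitting_subgroup :: "('a, 'b) monoid_scheme \<Rightarrow> 'a set" where
  "fitting_subgroup G = (THE L. is_fitting_subgroup G L)"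

end

theory Submission
  imports Defs
begin

definition cm :: "('a,'b) monoid_scheme \<Rightarrow> 'a \<Rightarrow> 'a \<Rightarrow> 'a" where
  "cm G x y = x \<otimes>\<^bsub>G\<^esub> y \<otimes>\<^bsub>G\<^esub> inv\<^bsub>G\<^esub> x \<otimes>\<^bsub>G\<^esub> inv\<^bsub>G\<^esub> y"

context group begin

lemma cm_closed[simp]: "x \<in> carrier G \<Longrightarrow> y \<in> carrier G \<Longrightarrow> cm G x y \<in> carrier G"
  by (simp add: cm_def)

lemma cmH:
  assumes "subgroup H G" "x \<in> H" "y \<in> H"
  shows "x \<otimes>\<^bsub>G\<lparr>carrier := H\<rparr>\<^esub> y \<otimes>\<^bsub>G\<lparr>carrier := H\<rparr>\<^esub> inv\<^bsub>G\<lparr>carrier := H\<rparr>\<^esub> x \<otimes>\<^bsub>G\<lparr>carrier := H\<rparr>\<^esub> inv\<^bsub>G\<lparr>carrier := H\<rparr>\<^esub> y = cm G x y"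
  using assms by (simp add: cm_def)

lemma cm_set_eq:
  assumes "subgroup H G" "M \<subseteq> H"
  shows "{x \<otimes>\<^bsub>G\<lparr>carrier := H\<rparr>\<^esub> y \<otimes>\<^bsub>G\<lparr>carrier := H\<rparr>\<^esub> inv\<^bsub>G\<lparr>carrier := H\<rparr>\<^esub> x \<otimes>\<^bsub>G\<lparr>carrier := H\<rparr>\<^esub> inv\<^bsub>G\<lparr>carrier := H\<rparr>\<^esub> y |x y.
              x \<in> carrier (G\<lparr>carrier := H\<rparr>) \<and> y \<in> M} = {cm G x y | x y. x \<in> H \<and> y \<in> M}"
  using assms apply (auto simp: cm_def)
   apply (rule_tac x=xa in exI, rule_tac x=y in exI, force)
  apply (rule_tac x=xa in exI, rule_tac x=y in exI, force)
  done

lemma LC_aux: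
  assumes H: "subgroup H G"
  shows "subgroup (lower_central (G\<lparr>carrier := H\<rparr>) i) G \<and> lower_central (G\<lparr>carrier := H\<rparr>) i \<subseteq> H
     \<and> lower_central (G\<lparr>carrier := H\<rparr>) (Suc i) = generate G {cm G x y | x y. x \<in> H \<and> y \<in> lower_central (G\<lparr>carrier := H\<rparr>) i}"
proof (induction i)
  case 0
  have sub: "{cm G x y | x y. x \<in> H \<and> y \<in> H} \<subseteq> H"
    using H by (auto simp: cm_def subgroup.m_closed subgroup.m_inv_closed)
  have "lower_central (G\<lparr>carrier := H\<rparr>) (Suc 0) = generate (G\<lparr>carrier := H\<rparr>) {cm G x y | x y. x \<in> H \<and> y \<in> H}"
    using cm_set_eq[OF H, of H] by simp
  also have "\<dots> = generate G {cm G x y | x y. x \<in> H \<and> y \<in> H}"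
    using generate_consistent[OF sub H] .
  finally show ?case using H by simp
next
  case (Suc i)
  let ?L = "lower_central (G\<lparr>carrier := H\<rparr>) i"
  have sub: "{cm G x y | x y. x \<in> H \<and> y \<in> ?L} \<subseteq> H"
    using H Suc.IH by (auto simp: cm_def subgroup.m_closed subgroup.m_inv_closed)
  have subc: "{cm G x y | x y. x \<in> H \<and> y \<in> ?L} \<subseteq> carrier G"
    using sub H subgroup.subset by blast
  have s1: "subgroup (lower_central (G\<lparr>carrier := H\<rparr>) (Suc i)) G"
    using Suc.IH generate_is_subgroup[OF subc] by simp
  have s2: "lower_central (G\<lparr>carrier := H\<rparr>) (Suc i) \<subseteq> H"
    using Suc.IH generate_subgroup_incl[OF sub H] by simp
  let ?M = "lower_central (G\<lparr>carrier := H\<rparr>) (Suc i)"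
  have sub2: "{cm G x y | x y. x \<in> H \<and> y \<in> ?M} \<subseteq> H"
    using H s2 by (auto simp: cm_def subgroup.m_closed subgroup.m_inv_closed)
  have "lower_central (G\<lparr>carrier := H\<rparr>) (Suc (Suc i)) = generate (G\<lparr>carrier := H\<rparr>) {cm G x y | x y. x \<in> H \<and> y \<in> ?M}"
    using cm_set_eq[OF H s2] by (simp only: lower_central.simps(2)[of _ "Suc i"])
  also have "\<dots> = generate G {cm G x y | x y. x \<in> H \<and> y \<in> ?M}"
    using generate_consistent[OF sub2 H] .
  finally show ?case using s1 s2 by blast
qed

lemma LC_sub: "subgroup H G \<Longrightarrow> lower_central (G\<lparr>carrier := H\<rparr>) i \<subseteq> H"
  using LC_aux by blast
lemma LC_subgroup: "subgroup H G \<Longrightarrow> subgroup (lower_central (G\<lparr>carrier := H\<rparr>) i) G"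
  using LC_aux by blast
lemma LC_Suc: "subgroup H G \<Longrightarrow> lower_central (G\<lparr>carrier := H\<rparr>) (Suc i) = generate G {cm G x y | x y. x \<in> H \<and> y \<in> lower_central (G\<lparr>carrier := H\<rparr>) i}"
  using LC_aux by blast

lemma cancel1 [simp]: "x \<in> carrier G \<Longrightarrow> y \<in> carrier G \<Longrightarrow> x \<otimes> (inv x \<otimes> y) = y"
  by (simp add: m_assoc[symmetric])
lemma cancel2 [simp]: "x \<in> carrier G \<Longrightarrow> y \<in> carrier G \<Longrightarrow> inv x \<otimes> (x \<otimes> y) = y"
  by (simp add: m_assoc[symmetric])

lemma cm_one: "x \<in> carrier G \<Longrightarrow> cm G x \<one> = \<one>"
  by (simp add: cm_def)
lemma cm_mult: "x \<in> carrier G \<Longrightarrow> a \<in> carrier G \<Longrightarrow> b \<in> carrier G \<Longrightarrow>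
   cm G x (a \<otimes> b) = cm G x a \<otimes> (a \<otimes> cm G x b \<otimes> inv a)"
  by (simp add: cm_def m_assoc inv_mult_group)
lemma cm_inv: "x \<in> carrier G \<Longrightarrow> a \<in> carrier G \<Longrightarrow>
   cm G x (inv a) = inv a \<otimes> inv (cm G x a) \<otimes> inv (inv a)"
  by (simp add: cm_def m_assoc inv_mult_group)
lemma cm_mult_left: "m \<in> carrier G \<Longrightarrow> n \<in> carrier G \<Longrightarrow> s \<in> carrier G \<Longrightarrow>
   cm G (m \<otimes> n) s = m \<otimes> cm G n s \<otimes> inv m \<otimes> cm G m s"
  by (simp add: cm_def m_assoc inv_mult_group)
lemma cm_conj: "g \<in> carrier G \<Longrightarrow> x \<in> carrier G \<Longrightarrow> y \<in> carrier G \<Longrightarrow>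
   g \<otimes> cm G x y \<otimes> inv g = cm G (g \<otimes> x \<otimes> inv g) (g \<otimes> y \<otimes> inv g)"
  by (simp add: cm_def m_assoc inv_mult_group)

lemma comm_gen:
  assumes T: "T \<lhd> G" and x: "x \<in> carrier G" and S: "S \<subseteq> carrier G"
    and hS: "\<And>s. s \<in> S \<Longrightarrow> cm G x s \<in> T"
    and q: "q \<in> generate G S"
  shows "cm G x q \<in> T"
  using q
proof (induction rule: generate.induct)
  case one
  then show ?case using x T by (simp add: cm_one normal_imp_subgroup subgroup.one_closed)
next
  case (incl h)
  then show ?case using hS by blast
next
  case (inv h)
  have h: "h \<in> carrier G" using inv S by blast
  have "inv (cm G x h) \<in> T" using hS[OF inv] T by (simp add: normal_imp_subgroup subgroup.m_inv_closed)
  then have "inv h \<otimes> inv (cm G x h) \<otimes> inv (inv h) \<in> T"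
    using normal.inv_op_closed1[OF T h] h by simp
  then show ?case using cm_inv[OF x h] by simp
next
  case (eng a b)
  have a: "a \<in> carrier G" and b: "b \<in> carrier G"
    using eng generate_in_carrier[OF S] by auto
  have "a \<otimes> cm G x b \<otimes> inv a \<in> T" using eng.IH(2) T a by (simp add: normal.inv_op_closed2)
  then have "cm G x a \<otimes> (a \<otimes> cm G x b \<otimes> inv a) \<in> T"
    using eng.IH(1) T by (simp add: normal_imp_subgroup subgroup.m_closed)
  then show ?case using cm_mult[OF x a b] by simp
qed

lemma LC_normal:
  assumes M: "M \<lhd> G"
  shows "lower_central (G\<lparr>carrier := M\<rparr>) i \<lhd> G"
proof (induction i)
  case 0
  then show ?case using M by simp
next
  case (Suc i)
  have Ms: "subgroup M G" using M normal_imp_subgroup by blast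
  let ?L = "lower_central (G\<lparr>carrier := M\<rparr>) i"
  have Lc: "?L \<subseteq> carrier G" using Suc normal_imp_subgroup subgroup.subset by blast
  have Mc: "M \<subseteq> carrier G" using Ms subgroup.subset by blast
  have C: "{cm G x y | x y. x \<in> M \<and> y \<in> ?L} \<subseteq> carrier G" using Lc Mc cm_closed by blast
  have "generate G {cm G x y | x y. x \<in> M \<and> y \<in> ?L} \<lhd> G"
  proof (rule normal_generateI[OF C])
    fix h g assume h: "h \<in> {cm G x y | x y. x \<in> M \<and> y \<in> ?L}" and g: "g \<in> carrier G"
    then obtain x y where xy: "x \<in> M" "y \<in> ?L" "h = cm G x y" by blast
    have "g \<otimes> h \<otimes> inv g = cm G (g \<otimes> x \<otimes> inv g) (g \<otimes> y \<otimes> inv g)"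
    proof -
      have "x \<in> carrier G" "y \<in> carrier G" using xy Lc Mc by auto
      then show ?thesis using cm_conj[OF g] xy(3) by simp
    qed
    moreover have "g \<otimes> x \<otimes> inv g \<in> M" using M xy g by (simp add: normal.inv_op_closed2)
    moreover have "g \<otimes> y \<otimes> inv g \<in> ?L" using Suc xy g by (simp add: normal.inv_op_closed2)
    ultimately show "g \<otimes> h \<otimes> inv g \<in> {cm G x y | x y. x \<in> M \<and> y \<in> ?L}" by blast
  qed
  then show ?case using LC_Suc[OF Ms] by simp
qed

lemma LC_triv:
  assumes H: "subgroup H G" and e: "lower_central (G\<lparr>carrier := H\<rparr>) i = {\<one>}" and ij: "i \<le> j"
  shows "lower_central (G\<lparr>carrier := H\<rparr>) j = {\<one>}"
  using ij
proof (induction j rule: dec_induct)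
  case base
  then show ?case using e .
next
  case (step j)
  have Hc: "H \<subseteq> carrier G" using H subgroup.subset by blast
  have "{cm G x y | x y. x \<in> H \<and> y \<in> lower_central (G\<lparr>carrier := H\<rparr>) j} \<subseteq> {\<one>}"
    using step.IH Hc cm_one by auto
  then have "lower_central (G\<lparr>carrier := H\<rparr>) (Suc j) \<subseteq> {\<one>}"
    using LC_Suc[OF H] generate_subgroup_incl[OF _ triv_subgroup] by simp
  moreover have "\<one> \<in> lower_central (G\<lparr>carrier := H\<rparr>) (Suc j)"
    using LC_subgroup[OF H] subgroup.one_closed by blast
  ultimately show ?case by blast
qed

lemma carrier_normal: "carrier G \<lhd> G"
  by (simp add: normal_inv_iff subgroup_self)

lemma normal_conj: "T \<lhd> G \<Longrightarrow> g \<in> carrier G \<Longrightarrow> t \<in> T \<Longrightarrow> g \<otimes> t \<otimes> inv g \<in> T"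
  by (rule normal.inv_op_closed2)
lemma normal_mult: "T \<lhd> G \<Longrightarrow> a \<in> T \<Longrightarrow> b \<in> T \<Longrightarrow> a \<otimes> b \<in> T"
  by (rule subgroup.m_closed[OF normal_imp_subgroup])
lemma normal_carrier: "T \<lhd> G \<Longrightarrow> t \<in> T \<Longrightarrow> t \<in> carrier G"
  by (rule subgroup.mem_carrier[OF normal_imp_subgroup])

lemma cm_in_left:
  assumes M: "M \<lhd> G" and x: "x \<in> M" and s: "s \<in> carrier G"
  shows "cm G x s \<in> M"
proof -
  have xc: "x \<in> carrier G" using normal_carrier[OF M x] .
  have "s \<otimes> inv x \<otimes> inv s \<in> M"
    using normal_conj[OF M s] x M by (simp add: normal_imp_subgroup subgroup.m_inv_closed)
  then have "x \<otimes> (s \<otimes> inv x \<otimes> inv s) \<in> M" using normal_mult[OF M x] by blast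
  then show ?thesis using xc s by (simp add: cm_def m_assoc)
qed

lemma cm_in_right:
  assumes B: "B \<lhd> G" and x: "x \<in> carrier G" and s: "s \<in> B"
  shows "cm G x s \<in> B"
proof -
  have sc: "s \<in> carrier G" using normal_carrier[OF B s] .
  have "x \<otimes> s \<otimes> inv x \<in> B" using normal_conj[OF B x s] .
  moreover have "inv s \<in> B" using B s by (simp add: normal_imp_subgroup subgroup.m_inv_closed)
  ultimately have "x \<otimes> s \<otimes> inv x \<otimes> inv s \<in> B" using normal_mult[OF B] by blast
  then show ?thesis by (simp add: cm_def)
qed

lemma cm_LC:
  assumes M: "M \<lhd> G" and x: "x \<in> M" and s: "s \<in> lower_central (G\<lparr>carrier := M\<rparr>) i"
  shows "cm G x s \<in> lower_central (G\<lparr>carrier := M\<rparr>) (Suc i)"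
proof -
  have "cm G x s \<in> {cm G x y | x y. x \<in> M \<and> y \<in> lower_central (G\<lparr>carrier := M\<rparr>) i}"
    using x s by blast
  then have "cm G x s \<in> generate G {cm G x y | x y. x \<in> M \<and> y \<in> lower_central (G\<lparr>carrier := M\<rparr>) i}"
    by (rule generate.incl)
  then show ?thesis using LC_Suc[OF normal_imp_subgroup[OF M]] by simp
qed

definition AA :: "'a set \<Rightarrow> nat \<Rightarrow> 'a set" where
  "AA M i = (if i = 0 then carrier G else lower_central (G\<lparr>carrier := M\<rparr>) (i - 1))"

lemma AA_normal: "M \<lhd> G \<Longrightarrow> AA M i \<lhd> G"
  by (simp add: AA_def carrier_normal LC_normal)

lemma AA_step:
  assumes M: "M \<lhd> G" and x: "x \<in> M" and s: "s \<in> AA M i"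
  shows "cm G x s \<in> AA M (Suc i)"
proof (cases i)
  case 0
  then show ?thesis using cm_in_left[OF M x] s by (simp add: AA_def)
next
  case (Suc k)
  then show ?thesis using cm_LC[OF M x] s by (simp add: AA_def)
qed

lemma AA_triv:
  assumes M: "M \<lhd> G" and e: "lower_central (G\<lparr>carrier := M\<rparr>) a = {\<one>}" and i: "Suc a \<le> i"
  shows "AA M i = {\<one>}"
  using i LC_triv[OF normal_imp_subgroup[OF M] e, of "i - 1"] by (simp add: AA_def)

lemma fitting_product:
  assumes M: "M \<lhd> G" and N: "N \<lhd> G"
    and eM: "lower_central (G\<lparr>carrier := M\<rparr>) a = {\<one>}"
    and eN: "lower_central (G\<lparr>carrier := N\<rparr>) b = {\<one>}"
  shows "lower_central (G\<lparr>carrier := M <#> N\<rparr>) (a + b) = {\<one>}"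
proof -
  define S where "S k = (\<Union>i\<in>{..Suc k}. AA M i \<inter> AA N (Suc k - i))" for k
  define Q where "Q k = generate G (S k)" for k
  have Sc: "S k \<subseteq> carrier G" for k
    unfolding S_def using AA_normal[OF M] normal_carrier by blast
  have Qn: "Q k \<lhd> G" for k
    unfolding Q_def
  proof (rule normal_generateI[OF Sc])
    fix h g assume h: "h \<in> S k" and g: "g \<in> carrier G"
    then obtain i where i: "i \<le> Suc k" "h \<in> AA M i" "h \<in> AA N (Suc k - i)"
      unfolding S_def by blast
    have 1: "g \<otimes> h \<otimes> inv g \<in> AA M i" by (rule normal_conj[OF AA_normal[OF M] g i(2)])
    have 2: "g \<otimes> h \<otimes> inv g \<in> AA N (Suc k - i)" by (rule normal_conj[OF AA_normal[OF N] g i(3)])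
    show "g \<otimes> h \<otimes> inv g \<in> S k"
      unfolding S_def by (rule UN_I[of i]) (use i(1) 1 2 in auto)
  qed
  have SQ: "S k \<subseteq> Q k" for k unfolding Q_def by (auto intro: generate.incl)
  have MNs: "subgroup (M <#> N) G" using normal_imp_subgroup[OF normal_subgroup_set_mult_closed[OF M N]] .
  have key: "cm G x s \<in> Q (Suc k)" if x: "x \<in> M <#> N" and s: "s \<in> S k" for x s k
  proof -
    obtain m n where mn: "m \<in> M" "n \<in> N" "x = m \<otimes> n"
      using x unfolding set_mult_def by blast
    have mc: "m \<in> carrier G" and nc: "n \<in> carrier G" using mn M N normal_carrier by auto
    have sc: "s \<in> carrier G" using s Sc by blast
    obtain i where i: "i \<le> Suc k" "s \<in> AA M i" "s \<in> AA N (Suc k - i)"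
      using s unfolding S_def by blast
    have "cm G n s \<in> AA N (Suc (Suc k - i))" using AA_step[OF N mn(2) i(3)] .
    moreover have "cm G n s \<in> AA M i" using cm_in_right[OF AA_normal[OF M] nc i(2)] .
    ultimately have mem: "cm G n s \<in> AA M i \<inter> AA N (Suc (Suc k) - i)"
      unfolding Suc_diff_le[OF i(1)] by blast
    have "cm G n s \<in> S (Suc k)" unfolding S_def by (rule UN_I[of i]) (use i(1) mem in auto)
    then have 1: "m \<otimes> cm G n s \<otimes> inv m \<in> Q (Suc k)" using SQ normal_conj[OF Qn mc] by blast
    have "cm G m s \<in> AA M (Suc i)" using AA_step[OF M mn(1) i(2)] .
    moreover have "cm G m s \<in> AA N (Suc k - i)" using cm_in_right[OF AA_normal[OF N] mc i(3)] .
    ultimately have mem2: "cm G m s \<in> AA M (Suc i) \<inter> AA N (Suc (Suc k) - Suc i)"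
      unfolding diff_Suc_Suc by blast
    have "cm G m s \<in> S (Suc k)" unfolding S_def by (rule UN_I[of "Suc i"]) (use i(1) mem2 in auto)
    then have 2: "cm G m s \<in> Q (Suc k)" using SQ by blast
    have "m \<otimes> cm G n s \<otimes> inv m \<otimes> cm G m s \<in> Q (Suc k)" using normal_mult[OF Qn 1 2] .
    then show ?thesis using cm_mult_left[OF mc nc sc] mn(3) by simp
  qed
  have key2: "cm G x q \<in> Q (Suc k)" if x: "x \<in> M <#> N" and q: "q \<in> Q k" for x q k
  proof -
    have xc: "x \<in> carrier G" by (rule subgroup.mem_carrier[OF MNs x])
    have q': "q \<in> generate G (S k)" using q unfolding Q_def .
    show ?thesis by (rule comm_gen[OF Qn xc Sc key[OF x] q'])
  qed
  have LQ: "lower_central (G\<lparr>carrier := M <#> N\<rparr>) k \<subseteq> Q k" for k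
  proof (induction k)
    case 0
    show ?case
    proof
      fix x assume "x \<in> lower_central (G\<lparr>carrier := M <#> N\<rparr>) 0"
      then have "x \<in> M <#> N" by simp
      then obtain m n where mn: "m \<in> M" "n \<in> N" "x = m \<otimes> n"
        unfolding set_mult_def by blast
      have mc: "m \<in> carrier G" and nc: "n \<in> carrier G" using mn M N normal_carrier by auto
      have "m \<in> AA M 1 \<inter> AA N (Suc 0 - 1)" using mn mc by (simp add: AA_def)
      then have "m \<in> S 0" unfolding S_def by (intro UN_I[of 1]) auto
      moreover have "n \<in> AA M 0 \<inter> AA N (Suc 0 - 0)" using mn nc by (simp add: AA_def)
      then have "n \<in> S 0" unfolding S_def by blast
      ultimately have "m \<in> generate G (S 0)" "n \<in> generate G (S 0)" by (auto intro: generate.incl)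
      then have "m \<otimes> n \<in> generate G (S 0)" by (rule generate.eng)
      then show "x \<in> Q 0" unfolding Q_def using mn(3) by simp
    qed
  next
    case (Suc k)
    have "{cm G x y | x y. x \<in> M <#> N \<and> y \<in> lower_central (G\<lparr>carrier := M <#> N\<rparr>) k} \<subseteq> Q (Suc k)"
      using Suc key2 by blast
    then have "generate G {cm G x y | x y. x \<in> M <#> N \<and> y \<in> lower_central (G\<lparr>carrier := M <#> N\<rparr>) k} \<subseteq> Q (Suc k)"
      by (rule generate_subgroup_incl[OF _ normal_imp_subgroup[OF Qn]])
    then show ?case using LC_Suc[OF MNs] by simp
  qed
  have "S (a + b) \<subseteq> {\<one>}"
  proof
    fix s assume "s \<in> S (a + b)"
    then obtain i where i: "i \<le> Suc (a + b)" "s \<in> AA M i" "s \<in> AA N (Suc (a + b) - i)"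
      unfolding S_def by blast
    show "s \<in> {\<one>}"
    proof (cases "Suc a \<le> i")
      case True
      then show ?thesis using AA_triv[OF M eM] i by blast
    next
      case False
      then have "Suc b \<le> Suc (a + b) - i" by simp
      then show ?thesis using AA_triv[OF N eN] i by blast
    qed
  qed
  then have "Q (a + b) \<subseteq> {\<one>}" unfolding Q_def using generate_subgroup_incl triv_subgroup by blast
  moreover have "\<one> \<in> lower_central (G\<lparr>carrier := M <#> N\<rparr>) (a + b)"
    using LC_subgroup[OF MNs] subgroup.one_closed by blast
  ultimately show ?thesis using LQ by blast
qed

lemma conj_hom: "g \<in> carrier G \<Longrightarrow> group_hom G G (\<lambda>x. g \<otimes> x \<otimes> inv g)"
  unfolding group_hom_def group_hom_axioms_def using is_group
  by (auto intro!: homI simp: m_assoc)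

lemma LC_conj:
  assumes g: "g \<in> carrier G" and H: "subgroup H G"
  shows "lower_central (G\<lparr>carrier := (\<lambda>x. g \<otimes> x \<otimes> inv g) ` H\<rparr>) i
       = (\<lambda>x. g \<otimes> x \<otimes> inv g) ` lower_central (G\<lparr>carrier := H\<rparr>) i"
proof (induction i)
  case 0
  then show ?case by simp
next
  case (Suc i)
  let ?f = "\<lambda>x. g \<otimes> x \<otimes> inv g"
  interpret f: group_hom G G ?f by (rule conj_hom[OF g])
  have fH: "subgroup (?f ` H) G" using f.subgroup_img_is_subgroup[OF H] .
  let ?L = "lower_central (G\<lparr>carrier := H\<rparr>) i"
  have Lc: "?L \<subseteq> carrier G" using LC_subgroup[OF H] subgroup.subset by blast
  have Hc: "H \<subseteq> carrier G" using H subgroup.subset by blast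
  have C: "{cm G x y | x y. x \<in> H \<and> y \<in> ?L} \<subseteq> carrier G" using Lc Hc cm_closed by blast
  have e: "{cm G x y | x y. x \<in> ?f ` H \<and> y \<in> ?f ` ?L} = ?f ` {cm G x y | x y. x \<in> H \<and> y \<in> ?L}"
  proof (intro equalityI subsetI)
    fix z assume "z \<in> {cm G x y | x y. x \<in> ?f ` H \<and> y \<in> ?f ` ?L}"
    then obtain x' y' where xy': "x' \<in> ?f ` H" "y' \<in> ?f ` ?L" "z = cm G x' y'" by blast
    obtain x where x: "x \<in> H" "x' = ?f x" using xy'(1) by (rule imageE) simp
    obtain y where y: "y \<in> ?L" "y' = ?f y" using xy'(2) by (rule imageE) simp
    have xy: "x \<in> H" "y \<in> ?L" "z = cm G (?f x) (?f y)" using x y xy'(3) by simp_all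
    have xc: "x \<in> carrier G" and yc: "y \<in> carrier G" using xy(1,2) Hc Lc by (blast, blast)
    have "z = ?f (cm G x y)" using trans[OF xy(3) cm_conj[OF g xc yc, symmetric]] .
    moreover have "cm G x y \<in> {cm G x y | x y. x \<in> H \<and> y \<in> ?L}" using xy(1,2) by blast
    ultimately show "z \<in> ?f ` {cm G x y | x y. x \<in> H \<and> y \<in> ?L}" by (rule image_eqI)
  next
    fix z assume "z \<in> ?f ` {cm G x y | x y. x \<in> H \<and> y \<in> ?L}"
    then obtain x y where xy: "x \<in> H" "y \<in> ?L" "z = ?f (cm G x y)" by blast
    have xc: "x \<in> carrier G" and yc: "y \<in> carrier G" using xy(1,2) Hc Lc by (blast, blast)
    have "z = cm G (?f x) (?f y)" using trans[OF xy(3) cm_conj[OF g xc yc]] .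
    moreover have "?f x \<in> ?f ` H" using xy(1) by (rule imageI)
    moreover have "?f y \<in> ?f ` ?L" using xy(2) by (rule imageI)
    ultimately show "z \<in> {cm G x y | x y. x \<in> ?f ` H \<and> y \<in> ?f ` ?L}" by blast
  qed
  have "lower_central (G\<lparr>carrier := ?f ` H\<rparr>) (Suc i) = generate G {cm G x y | x y. x \<in> ?f ` H \<and> y \<in> ?f ` ?L}"
    by (subst LC_Suc[OF fH]) (simp only: Suc)
  also have "\<dots> = generate G (?f ` {cm G x y | x y. x \<in> H \<and> y \<in> ?L})" using e by simp
  also have "\<dots> = ?f ` generate G {cm G x y | x y. x \<in> H \<and> y \<in> ?L}" using f.generate_img[OF C] .
  also have "\<dots> = ?f ` lower_central (G\<lparr>carrier := H\<rparr>) (Suc i)" by (simp only: LC_Suc[OF H])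
  finally show ?case .
qed

lemma nilpotent_conj:
  assumes g: "g \<in> carrier G" and H: "subgroup H G" and nil: "nilpotent_group (G\<lparr>carrier := H\<rparr>)"
  shows "nilpotent_group (G\<lparr>carrier := (\<lambda>x. g \<otimes> x \<otimes> inv g) ` H\<rparr>)"
proof -
  interpret f: group_hom G G "\<lambda>x. g \<otimes> x \<otimes> inv g" by (rule conj_hom[OF g])
  have fH: "subgroup ((\<lambda>x. g \<otimes> x \<otimes> inv g) ` H) G" using f.subgroup_img_is_subgroup[OF H] .
  obtain i where i: "lower_central (G\<lparr>carrier := H\<rparr>) i = {\<one>}" using nil unfolding nilpotent_group_def by auto
  have im: "(\<lambda>x. g \<otimes> x \<otimes> inv g) ` {\<one>} = {\<one>}" using g by simp
  have e: "lower_central (G\<lparr>carrier := (\<lambda>x. g \<otimes> x \<otimes> inv g) ` H\<rparr>) i = {\<one>}"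
    using LC_conj[OF g H, of i] unfolding i im .
  have gr: "group (G\<lparr>carrier := (\<lambda>x. g \<otimes> x \<otimes> inv g) ` H\<rparr>)" using subgroup_imp_group[OF fH] .
  show ?thesis unfolding nilpotent_group_def using gr e by auto
qed

lemma nilpotent_product:
  assumes M: "M \<lhd> G" and N: "N \<lhd> G"
    and nM: "nilpotent_group (G\<lparr>carrier := M\<rparr>)" and nN: "nilpotent_group (G\<lparr>carrier := N\<rparr>)"
  shows "nilpotent_group (G\<lparr>carrier := M <#> N\<rparr>)"
proof -
  obtain a where a: "lower_central (G\<lparr>carrier := M\<rparr>) a = {\<one>}" using nM unfolding nilpotent_group_def by auto
  obtain b where b: "lower_central (G\<lparr>carrier := N\<rparr>) b = {\<one>}" using nN unfolding nilpotent_group_def by auto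
  have MNs: "subgroup (M <#> N) G" using normal_imp_subgroup[OF normal_subgroup_set_mult_closed[OF M N]] .
  have e: "lower_central (G\<lparr>carrier := M <#> N\<rparr>) (a + b) = {\<one>}" using fitting_product[OF M N a b] .
  have gr: "group (G\<lparr>carrier := M <#> N\<rparr>)" using subgroup_imp_group[OF MNs] .
  show ?thesis unfolding nilpotent_group_def using gr e by auto
qed

lemma set_mult_sup:
  assumes M: "subgroup M G" and N: "subgroup N G"
  shows "M \<subseteq> M <#> N" "N \<subseteq> M <#> N"
proof -
  show "M \<subseteq> M <#> N"
  proof
    fix x assume x: "x \<in> M"
    have "x = x \<otimes> \<one>" using x M subgroup.mem_carrier by fastforce
    then show "x \<in> M <#> N" unfolding set_mult_def using x subgroup.one_closed[OF N] by blast
  qed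
  show "N \<subseteq> M <#> N"
  proof
    fix x assume x: "x \<in> N"
    have "x = \<one> \<otimes> x" using x N subgroup.mem_carrier by fastforce
    then show "x \<in> M <#> N" unfolding set_mult_def using x subgroup.one_closed[OF M] by blast
  qed
qed

lemma fitting_unique:
  assumes "is_fitting_subgroup G L1" "is_fitting_subgroup G L2"
  shows "L1 = L2"
  using assms unfolding is_fitting_subgroup_def by blast

lemma fitting_exists:
  assumes fin: "finite (carrier G)"
  shows "is_fitting_subgroup G (fitting_subgroup G)"
proof -
  define F where "F = {N. N \<lhd> G \<and> nilpotent_group (G\<lparr>carrier := N\<rparr>)}"
  have "F \<subseteq> Pow (carrier G)"
  proof
    fix N assume "N \<in> F"
    then have "N \<lhd> G" unfolding F_def by simp
    then have "N \<subseteq> carrier G" by (rule subgroup.subset[OF normal_imp_subgroup])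
    then show "N \<in> Pow (carrier G)" by simp
  qed
  then have finF: "finite F" by (rule finite_subset) (simp add: fin)
  have "nilpotent_group (G\<lparr>carrier := {\<one>}\<rparr>)"
    unfolding nilpotent_group_def using subgroup_imp_group[OF triv_subgroup] by (auto intro!: exI[of _ 0])
  then have "{\<one>} \<in> F" unfolding F_def using one_is_normal by simp
  then have "F \<noteq> {}" by auto
  then obtain L where L: "L \<in> F" and Lmax: "\<forall>N\<in>F. L \<subseteq> N \<longrightarrow> L = N"
    using finite_has_maximal[OF finF] by auto
  have Ln: "L \<lhd> G" and nL: "nilpotent_group (G\<lparr>carrier := L\<rparr>)" using L unfolding F_def by simp_all
  have fit: "is_fitting_subgroup G L"
    unfolding is_fitting_subgroup_def
  proof (intro conjI allI impI)
    show "L \<lhd> G" by (rule Ln)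
    show "nilpotent_group (G\<lparr>carrier := L\<rparr>)" by (rule nL)
    fix N assume N: "N \<lhd> G \<and> nilpotent_group (G\<lparr>carrier := N\<rparr>)"
    have Nn: "N \<lhd> G" and nN: "nilpotent_group (G\<lparr>carrier := N\<rparr>)" using N by simp_all
    have "L <#> N \<lhd> G" by (rule normal_subgroup_set_mult_closed[OF Ln Nn])
    moreover have "nilpotent_group (G\<lparr>carrier := L <#> N\<rparr>)" by (rule nilpotent_product[OF Ln Nn nL nN])
    ultimately have LN: "L <#> N \<in> F" unfolding F_def by simp
    have s1: "L \<subseteq> L <#> N" and s2: "N \<subseteq> L <#> N"
      using set_mult_sup[OF normal_imp_subgroup[OF Ln] normal_imp_subgroup[OF Nn]] by simp_all
    have "L = L <#> N" using Lmax LN s1 by simp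
    then show "N \<subseteq> L" using s2 by simp
  qed
  have "fitting_subgroup G = L"
    unfolding fitting_subgroup_def by (rule the_equality[where P="is_fitting_subgroup G", OF fit]) (rule fitting_unique[OF _ fit])
  then show ?thesis using fit by simp
qed

lemma normal_sub_iff:
  assumes K: "subgroup K G"
  shows "N \<lhd> G\<lparr>carrier := K\<rparr> \<longleftrightarrow> subgroup N G \<and> N \<subseteq> K \<and> (\<forall>k\<in>K. \<forall>n\<in>N. k \<otimes> n \<otimes> inv k \<in> N)"
proof -
  have GK: "group (G\<lparr>carrier := K\<rparr>)" by (rule subgroup_imp_group[OF K])
  have "N \<lhd> G\<lparr>carrier := K\<rparr> \<longleftrightarrow> subgroup N (G\<lparr>carrier := K\<rparr>) \<and>
      (\<forall>x\<in>carrier (G\<lparr>carrier := K\<rparr>). \<forall>h\<in>N. x \<otimes>\<^bsub>G\<lparr>carrier := K\<rparr>\<^esub> h \<otimes>\<^bsub>G\<lparr>carrier := K\<rparr>\<^esub> inv\<^bsub>G\<lparr>carrier := K\<rparr>\<^esub> x \<in> N)"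
    by (rule group.normal_inv_iff[OF GK])
  also have "\<dots> \<longleftrightarrow> subgroup N (G\<lparr>carrier := K\<rparr>) \<and> (\<forall>k\<in>K. \<forall>n\<in>N. k \<otimes> n \<otimes> inv k \<in> N)"
    using K by simp
  also have "subgroup N (G\<lparr>carrier := K\<rparr>) \<longleftrightarrow> subgroup N G \<and> N \<subseteq> K"
  proof
    assume a: "subgroup N (G\<lparr>carrier := K\<rparr>)"
    have "subgroup N G" by (rule incl_subgroup[OF K a])
    moreover have "N \<subseteq> K" using subgroup.subset[OF a] by simp
    ultimately show "subgroup N G \<and> N \<subseteq> K" by blast
  next
    assume a: "subgroup N G \<and> N \<subseteq> K"
    then show "subgroup N (G\<lparr>carrier := K\<rparr>)" using subgroup_incl[OF _ K] by blast
  qed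
  finally show ?thesis by blast
qed

lemma conj_conj:
  assumes g: "g \<in> carrier G" and k: "k \<in> carrier G" and f: "f \<in> carrier G"
  shows "k \<otimes> (g \<otimes> f \<otimes> inv g) \<otimes> inv k = g \<otimes> ((inv g \<otimes> k \<otimes> g) \<otimes> f \<otimes> inv (inv g \<otimes> k \<otimes> g)) \<otimes> inv g"
  using assms by (simp add: m_assoc inv_mult_group)

lemma fitting_of_normal_trivial:
  assumes fin: "finite (carrier G)" and K: "K \<lhd> G" and KL: "K \<inter> fitting_subgroup G \<subseteq> {\<one>}"
  shows "fitting_subgroup (G\<lparr>carrier := K\<rparr>) = {\<one>}"
proof -
  have Ks: "subgroup K G" by (rule normal_imp_subgroup[OF K])
  have Kc: "K \<subseteq> carrier G" by (rule subgroup.subset[OF Ks])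
  have GK: "group (G\<lparr>carrier := K\<rparr>)" by (rule subgroup_imp_group[OF Ks])
  have finK: "finite (carrier (G\<lparr>carrier := K\<rparr>))" using finite_subset[OF Kc fin] by simp
  define FK where "FK = fitting_subgroup (G\<lparr>carrier := K\<rparr>)"
  have fitK: "is_fitting_subgroup (G\<lparr>carrier := K\<rparr>) FK"
    unfolding FK_def by (rule group.fitting_exists[OF GK finK])
  have FKn: "FK \<lhd> G\<lparr>carrier := K\<rparr>" and nFK: "nilpotent_group (G\<lparr>carrier := FK\<rparr>)"
    and FKmax: "\<And>N. N \<lhd> G\<lparr>carrier := K\<rparr> \<Longrightarrow> nilpotent_group (G\<lparr>carrier := N\<rparr>) \<Longrightarrow> N \<subseteq> FK"
    using fitK unfolding is_fitting_subgroup_def by simp_all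
  have FKs: "subgroup FK G" and FKK: "FK \<subseteq> K" and FKc: "\<forall>k\<in>K. \<forall>n\<in>FK. k \<otimes> n \<otimes> inv k \<in> FK"
    using FKn unfolding normal_sub_iff[OF Ks] by simp_all
  have FKG: "FK \<lhd> G"
    unfolding normal_inv_iff
  proof (intro conjI ballI)
    show "subgroup FK G" by (rule FKs)
    fix g f assume g: "g \<in> carrier G" and f: "f \<in> FK"
    let ?c = "\<lambda>x. g \<otimes> x \<otimes> inv g"
    interpret c: group_hom G G ?c by (rule conj_hom[OF g])
    have s: "subgroup (?c ` FK) G" by (rule c.subgroup_img_is_subgroup[OF FKs])
    have sub: "?c ` FK \<subseteq> K"
    proof
      fix y assume "y \<in> ?c ` FK"
      then obtain x where x: "x \<in> FK" "y = ?c x" by (rule imageE) simp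
      have "x \<in> K" using x(1) FKK by blast
      then show "y \<in> K" using normal_conj[OF K g] x(2) by simp
    qed
    have cl: "\<forall>k\<in>K. \<forall>n\<in>?c ` FK. k \<otimes> n \<otimes> inv k \<in> ?c ` FK"
    proof (intro ballI)
      fix k n assume k: "k \<in> K" and n: "n \<in> ?c ` FK"
      obtain x where x: "x \<in> FK" "n = ?c x" using n by (rule imageE) simp
      have kc: "k \<in> carrier G" using k Kc by blast
      have xc: "x \<in> carrier G" using x(1) FKK Kc by blast
      have k': "inv g \<otimes> k \<otimes> g \<in> K" using normal.inv_op_closed1[OF K g k] .
      have "(inv g \<otimes> k \<otimes> g) \<otimes> x \<otimes> inv (inv g \<otimes> k \<otimes> g) \<in> FK" using FKc k' x(1) by blast
      then have "?c ((inv g \<otimes> k \<otimes> g) \<otimes> x \<otimes> inv (inv g \<otimes> k \<otimes> g)) \<in> ?c ` FK" by (rule imageI)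
      then show "k \<otimes> n \<otimes> inv k \<in> ?c ` FK" using conj_conj[OF g kc xc] x(2) by simp
    qed
    have "?c ` FK \<lhd> G\<lparr>carrier := K\<rparr>" unfolding normal_sub_iff[OF Ks] using s sub cl by blast
    moreover have "nilpotent_group (G\<lparr>carrier := ?c ` FK\<rparr>)" by (rule nilpotent_conj[OF g FKs nFK])
    ultimately have "?c ` FK \<subseteq> FK" by (rule FKmax)
    then show "g \<otimes> f \<otimes> inv g \<in> FK" using f by blast
  qed
  have "is_fitting_subgroup G (fitting_subgroup G)" by (rule fitting_exists[OF fin])
  then have "FK \<subseteq> fitting_subgroup G" using FKG nFK unfolding is_fitting_subgroup_def by blast
  then have "FK \<subseteq> {\<one>}" using FKK KL by blast
  moreover have "\<one> \<in> FK" by (rule subgroup.one_closed[OF FKs])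
  ultimately show ?thesis unfolding FK_def[symmetric] by blast
qed

end

lemma (in group) main_aux:
  fixes \<rho> :: "'a \<Rightarrow> real^'n^'n"
  assumes fin: "finite (carrier G)"
    and hom: "\<forall>x \<in> carrier G. \<forall>y \<in> carrier G. \<rho> (x \<otimes> y) = \<rho> x ** \<rho> y"
    and SO: "\<forall>x \<in> carrier G. orthogonal_matrix (\<rho> x) \<and> det (\<rho> x) = 1"
    and faithful: "inj_on \<rho> (carrier G)"
  defines "L \<equiv> fitting_subgroup G"
  defines "UL_fix \<equiv> {v :: real^'n. \<forall>g \<in> L. \<rho> g *v v = v}"
  defines "U_L \<equiv> orthogonal_comp UL_fix"
  defines "K \<equiv> {g \<in> carrier G. \<forall>u \<in> U_L. \<rho> g *v u = u}"
  shows "fitting_subgroup (G\<lparr>carrier := K\<rparr>) = {\<one>}"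
proof -
  have orth: "transpose (\<rho> x) ** \<rho> x = mat 1" "\<rho> x ** transpose (\<rho> x) = mat 1" if "x \<in> carrier G" for x
    using SO that unfolding orthogonal_matrix_def by auto
  have homm: "\<rho> (x \<otimes> y) = \<rho> x ** \<rho> y" if "x \<in> carrier G" "y \<in> carrier G" for x y
    using hom that by blast
  have rho1: "\<rho> \<one> = mat 1"
  proof -
    have e: "\<rho> \<one> = \<rho> \<one> ** \<rho> \<one>" using homm[of \<one> \<one>] by simp
    have "mat 1 = transpose (\<rho> \<one>) ** \<rho> \<one>" using orth(1)[of \<one>] by simp
    also have "\<dots> = transpose (\<rho> \<one>) ** (\<rho> \<one> ** \<rho> \<one>)" using e by simp
    also have "\<dots> = (transpose (\<rho> \<one>) ** \<rho> \<one>) ** \<rho> \<one>" by (rule matrix_mul_assoc)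
    also have "\<dots> = \<rho> \<one>" using orth(1)[of \<one>] by simp
    finally show ?thesis by simp
  qed
  have rhoinv: "\<rho> (inv g) = transpose (\<rho> g)" if g: "g \<in> carrier G" for g
  proof -
    have e: "\<rho> (inv g) ** \<rho> g = mat 1" using homm[of "inv g" g] g rho1 by simp
    have "\<rho> (inv g) = \<rho> (inv g) ** (\<rho> g ** transpose (\<rho> g))" using orth(2)[OF g] by simp
    also have "\<dots> = (\<rho> (inv g) ** \<rho> g) ** transpose (\<rho> g)" by (rule matrix_mul_assoc)
    also have "\<dots> = transpose (\<rho> g)" using e by simp
    finally show ?thesis .
  qed
  have act: "\<rho> (x \<otimes> y) *v v = \<rho> x *v (\<rho> y *v v)" if "x \<in> carrier G" "y \<in> carrier G" for x y v
    using homm[OF that] by (simp add: matrix_vector_mul_assoc)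
  have fitL: "is_fitting_subgroup G L" unfolding L_def by (rule fitting_exists[OF fin])
  have Ln: "L \<lhd> G" using fitL unfolding is_fitting_subgroup_def by blast
  have Lc: "L \<subseteq> carrier G" using Ln normal_carrier by blast
  have fix_inv: "\<rho> g *v v \<in> UL_fix" if g: "g \<in> carrier G" and v: "v \<in> UL_fix" for g v
  proof -
    have "\<rho> l *v (\<rho> g *v v) = \<rho> g *v v" if l: "l \<in> L" for l
    proof -
      have lc: "l \<in> carrier G" using l Lc by blast
      have l': "inv g \<otimes> l \<otimes> g \<in> L" using normal.inv_op_closed1[OF Ln g l] .
      have e: "l \<otimes> g = g \<otimes> (inv g \<otimes> l \<otimes> g)" using g lc by (simp add: m_assoc)
      have "\<rho> l *v (\<rho> g *v v) = \<rho> (l \<otimes> g) *v v" using act[OF lc g] by simp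
      also have "\<dots> = \<rho> g *v (\<rho> (inv g \<otimes> l \<otimes> g) *v v)" unfolding e using act g lc by simp
      also have "\<rho> (inv g \<otimes> l \<otimes> g) *v v = v" using v l' unfolding UL_fix_def by blast
      finally show ?thesis .
    qed
    then show ?thesis unfolding UL_fix_def by blast
  qed
  have UL_inv: "\<rho> g *v u \<in> U_L" if g: "g \<in> carrier G" and u: "u \<in> U_L" for g u
    unfolding U_L_def orthogonal_comp_def
  proof (intro CollectI ballI)
    fix y assume y: "y \<in> UL_fix"
    have "y \<bullet> (\<rho> g *v u) = (y v* \<rho> g) \<bullet> u" by (simp add: dot_lmul_matrix)
    also have "y v* \<rho> g = \<rho> (inv g) *v y" using rhoinv[OF g] by simp
    finally have "y \<bullet> (\<rho> g *v u) = (\<rho> (inv g) *v y) \<bullet> u" .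
    moreover have "\<rho> (inv g) *v y \<in> UL_fix" using fix_inv[of "inv g" y] g y by simp
    ultimately have "y \<bullet> (\<rho> g *v u) = 0" using u unfolding U_L_def orthogonal_comp_def orthogonal_def by simp
    then show "orthogonal y (\<rho> g *v u)" unfolding orthogonal_def .
  qed
  have Ks: "subgroup K G"
  proof (rule subgroupI)
    show "K \<subseteq> carrier G" unfolding K_def by blast
    have "\<one> \<in> K" unfolding K_def using rho1 by simp
    then show "K \<noteq> {}" by blast
  next
    fix a assume a: "a \<in> K"
    have ac: "a \<in> carrier G" using a unfolding K_def by blast
    have "\<rho> (inv a) *v u = u" if u: "u \<in> U_L" for u
    proof -
      have "\<rho> (inv a) *v u = \<rho> (inv a) *v (\<rho> a *v u)" using a u unfolding K_def by simp
      also have "\<dots> = \<rho> (inv a \<otimes> a) *v u" using act[of "inv a" a u] ac by simp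
      also have "\<dots> = u" using ac rho1 by simp
      finally show ?thesis .
    qed
    then show "inv a \<in> K" unfolding K_def using ac by simp
  next
    fix a b assume a: "a \<in> K" and b: "b \<in> K"
    have ac: "a \<in> carrier G" and bc: "b \<in> carrier G" using a b unfolding K_def by blast+
    have "\<rho> (a \<otimes> b) *v u = u" if u: "u \<in> U_L" for u
      using act[OF ac bc] a b u unfolding K_def by simp
    then show "a \<otimes> b \<in> K" unfolding K_def using ac bc by simp
  qed
  have Kn: "K \<lhd> G"
    unfolding normal_inv_iff
  proof (intro conjI ballI)
    show "subgroup K G" by (rule Ks)
    fix g k assume g: "g \<in> carrier G" and k: "k \<in> K"
    have kc: "k \<in> carrier G" using k unfolding K_def by blast
    have "\<rho> (g \<otimes> k \<otimes> inv g) *v u = u" if u: "u \<in> U_L" for u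
    proof -
      have u': "\<rho> (inv g) *v u \<in> U_L" using UL_inv[of "inv g" u] g u by simp
      have "\<rho> (g \<otimes> k \<otimes> inv g) *v u = \<rho> g *v (\<rho> k *v (\<rho> (inv g) *v u))"
        using act g kc by simp
      also have "\<rho> k *v (\<rho> (inv g) *v u) = \<rho> (inv g) *v u" using k u' unfolding K_def by blast
      also have "\<rho> g *v (\<rho> (inv g) *v u) = \<rho> (g \<otimes> inv g) *v u" using act[of g "inv g" u] g by simp
      also have "\<dots> = u" using g rho1 by simp
      finally show ?thesis .
    qed
    then show "g \<otimes> k \<otimes> inv g \<in> K" unfolding K_def using g kc by simp
  qed
  have sub: "subspace UL_fix"
    unfolding subspace_def UL_fix_def
    by (simp add: matrix_vector_right_distrib matrix_vector_mult_scaleR)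
  have KL: "K \<inter> L \<subseteq> {\<one>}"
  proof
    fix g assume g: "g \<in> K \<inter> L"
    have gc: "g \<in> carrier G" using g unfolding K_def by blast
    have "\<rho> g *v v = mat 1 *v v" for v
    proof -
      have "v \<in> UL_fix + U_L" using subspace_sum_orthogonal_comp[OF sub] unfolding U_L_def by simp
      then obtain p q where pq: "p \<in> UL_fix" "q \<in> U_L" "v = p + q" by (rule set_plus_elim)
      have "\<rho> g *v p = p" using pq(1) g unfolding UL_fix_def by blast
      moreover have "\<rho> g *v q = q" using pq(2) g unfolding K_def by blast
      ultimately show ?thesis using pq(3) by (simp add: matrix_vector_right_distrib)
    qed
    then have "\<rho> g = \<rho> \<one>" using rho1 matrix_eq by metis
    then have "g = \<one>" using faithful gc inj_onD by fastforce
    then show "g \<in> {\<one>}" by simp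
  qed
  show ?thesis
    by (rule fitting_of_normal_trivial[OF fin Kn]) (use KL L_def in blast)
qed


theorem proposition2p7:
  fixes G :: "('g, 'b) monoid_scheme"
    and \<rho> :: "'g \<Rightarrow> real^'n^'n"
  assumes "group G" and "finite (carrier G)"
    and hom: "\<forall>x \<in> carrier G. \<forall>y \<in> carrier G. \<rho> (x \<otimes>\<^bsub>G\<^esub> y) = \<rho> x ** \<rho> y"
    and SO: "\<forall>x \<in> carrier G. orthogonal_matrix (\<rho> x) \<and> det (\<rho> x) = 1"
    and faithful: "inj_on \<rho> (carrier G)"
  defines "L \<equiv> fitting_subgroup G"
  defines "UL_fix \<equiv> {v :: real^'n. \<forall>g \<in> L. \<rho> g *v v = v}"
  defines "U_L \<equiv> orthogonal_comp UL_fix"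
  defines "K \<equiv> {g \<in> carrier G. \<forall>u \<in> U_L. \<rho> g *v u = u}"
  shows "fitting_subgroup (G\<lparr>carrier := K\<rparr>) = {\<one>\<^bsub>G\<^esub>}"
  using group.main_aux[OF assms(1) assms(2) hom SO faithful]
  unfolding K_def U_L_def UL_fix_def L_def .

end
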